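(* Let $Z=\operatorname{diag}(z_1,\dots,z_N)$ with distinct real $z_i$, and let $\bm w_1,\bm w_2,\bm v_1\in\mathbb{R}^N$ satisfy $\bm w_1^T\bm v_1=1$, $\bm w_2^T\bm v_1=0$, $\bm w_2^TZ\bm v_1=1$. Suppose there exist $V=[\bm v_1,\dots,\bm v_N]$, $W=[\bm w_1,\dots,\bm w_N]\in\mathbb{R}^{N\times N}$ (with the given first columns $\bm v_1$ and $\bm w_1,\bm w_2$) and $H\in\mathbb{R}^{N\times N}$ with $H_{i,i}=b_{i-1}$, $H_{i+1,i}=1$, $H_{i,i+1}=c_i$, $H_{i,i+2}=d_{i+1}$ and all other entries zero, such that $W^TZV=H$ and $W^TV=I_N$. Assume moreover $d_n\neq0$ for $n=2,\dots,N-1$. Then for every $m\le N$, $\{\bm v_i\}_{i=1}^m$ is a basis of $\mathcal K_m(Z,\bm v_1)$ and $\{\bm w_i\}_{i=1}^m$ is a basis of $\mathcal K_m^{\square}(Z,[\bm w_1,\bm w_2])$.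
   Context: Krylov subspace: $\mathcal K_m(M,\bm v)=\operatorname{span}\{\bm v,M\bm v,\dots,M^{m-1}\bm v\}$. Block Krylov subspace with two starting vectors: $\mathcal K_m^{\square}(M,[\bm w_1,\bm w_2])=\mathcal K_k(M,\bm w_1)+\mathcal K_k(M,\bm w_2)$ if $m=2k$, and $=\mathcal K_{k+1}(M,\bm w_1)+\mathcal K_k(M,\bm w_2)$ if $m=2k+1$ (with $\mathcal K_0=\{0\}$). *)

theory Defs
  imports "HOL-Analysis.Analysis"
begin

definition diag_mat :: "('n::finite \<Rightarrow> real) \<Rightarrow> real^'n^'n" where
  "diag_mat z = (\<chi> i j. if i = j then z i else 0)"

definition krylov :: "real^'n^'n \<Rightarrow> real^'n \<Rightarrow> nat \<Rightarrow> (real^'n) set" where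
  "krylov M v m = span {((\<lambda>x. M *v x) ^^ k) v | k. k < m}"

text \<open>Block Krylov subspace with two starting vectors:
  m = 2k: K_k(M,w1) + K_k(M,w2);  m = 2k+1: K_(k+1)(M,w1) + K_k(M,w2).\<close>
definition block_krylov :: "real^'n^'n \<Rightarrow> real^'n \<Rightarrow> real^'n \<Rightarrow> nat \<Rightarrow> (real^'n) set" where
  "block_krylov M w1 w2 m =
     {x + y | x y. x \<in> krylov M w1 ((m + 1) div 2) \<and> y \<in> krylov M w2 (m div 2)}"

definition is_basis_family :: "(nat \<Rightarrow> real^'n) \<Rightarrow> nat \<Rightarrow> (real^'n) set \<Rightarrow> bool" where
  "is_basis_family b m S \<longleftrightarrow>
     inj_on b {1..m} \<and> independent (b ` {1..m}) \<and> span (b ` {1..m}) = S"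

end

theory Submission imports Defs begin

lemma dual_indep:
  fixes e u :: "nat \<Rightarrow> real^'n"
  assumes du: "\<And>i j. i \<in> {1..m} \<Longrightarrow> j \<in> {1..m} \<Longrightarrow> u i \<bullet> e j = (if i = j then 1 else 0)"
  shows "inj_on e {1..m} \<and> independent (e ` {1..m})"
proof
  show inj: "inj_on e {1..m}"
  proof (rule inj_onI)
    fix i j assume "i \<in> {1..m}" "j \<in> {1..m}" "e i = e j"
    then show "i = j" using du[of i i] du[of i j] by (auto split: if_splits)
  qed
  show "independent (e ` {1..m})"
  proof (rule independent_if_scalars_zero)
    show "finite (e ` {1..m})" by simp
    fix f x assume s: "(\<Sum>x\<in>e ` {1..m}. f x *\<^sub>R x) = 0" and x: "x \<in> e ` {1..m}"
    then obtain j where j: "j \<in> {1..m}" "x = e j" by auto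
    have "(\<Sum>i\<in>{1..m}. f (e i) *\<^sub>R e i) = 0" using s sum.reindex[OF inj, of "\<lambda>x. f x *\<^sub>R x"] by simp
    then have "u j \<bullet> (\<Sum>i\<in>{1..m}. f (e i) *\<^sub>R e i) = 0" by simp
    then have "(\<Sum>i\<in>{1..m}. f (e i) * (u j \<bullet> e i)) = 0" by (simp add: inner_sum_right)
    also have "(\<Sum>i\<in>{1..m}. f (e i) * (u j \<bullet> e i)) = (\<Sum>i\<in>{1..m}. if i = j then f (e j) else 0)"
      using j by (intro sum.cong) (auto simp: du)
    also have "\<dots> = f (e j)" using j by simp
    finally show "f x = 0" using j by simp
  qed
qed

lemma dual_span_UNIV:
  fixes e u :: "nat \<Rightarrow> real^'n"
  assumes du: "\<And>i j. i \<in> {1..CARD('n)} \<Longrightarrow> j \<in> {1..CARD('n)} \<Longrightarrow> u i \<bullet> e j = (if i = j then 1 else 0)"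
  shows "span (e ` {1..CARD('n)}) = UNIV"
proof -
  have ii: "inj_on e {1..CARD('n)} \<and> independent (e ` {1..CARD('n)})" by (rule dual_indep[OF du])
  then have "card (e ` {1..CARD('n)}) = CARD('n)" by (simp add: card_image)
  then have "UNIV \<subseteq> span (e ` {1..CARD('n)})"
    using ii by (intro card_ge_dim_independent) auto
  then show ?thesis by auto
qed

lemma dual_expand:
  fixes e u :: "nat \<Rightarrow> real^'n"
  assumes du: "\<And>i j. i \<in> {1..CARD('n)} \<Longrightarrow> j \<in> {1..CARD('n)} \<Longrightarrow> u i \<bullet> e j = (if i = j then 1 else 0)"
  shows "x = (\<Sum>i\<in>{1..CARD('n)}. (u i \<bullet> x) *\<^sub>R e i)"
proof -
  define y where "y = x - (\<Sum>i\<in>{1..CARD('n)}. (u i \<bullet> x) *\<^sub>R e i)"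
  have du': "\<And>i j. i \<in> {1..CARD('n)} \<Longrightarrow> j \<in> {1..CARD('n)} \<Longrightarrow> e i \<bullet> u j = (if i = j then 1 else 0)"
    using du by (simp add: inner_commute)
  have o: "orthogonal y (u j)" if j: "j \<in> {1..CARD('n)}" for j
  proof -
    have "(\<Sum>i\<in>{1..CARD('n)}. (u i \<bullet> x) * (u j \<bullet> e i)) = (\<Sum>i\<in>{1..CARD('n)}. if i = j then u j \<bullet> x else 0)"
      using j by (intro sum.cong) (auto simp: du)
    moreover have "u j \<bullet> y = u j \<bullet> x - (\<Sum>i\<in>{1..CARD('n)}. (u i \<bullet> x) * (u j \<bullet> e i))"
      unfolding y_def by (simp add: inner_diff_right inner_sum_right)
    ultimately have "u j \<bullet> y = 0" using j by simp
    then show ?thesis unfolding orthogonal_def by (simp add: inner_commute)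
  qed
  have "orthogonal y y"
    using orthogonal_to_span[of y "u ` {1..CARD('n)}" y] o dual_span_UNIV[OF du'] by (metis imageE atLeastAtMost_iff iso_tuple_UNIV_I)
  then have "y = 0" by (simp add: orthogonal_def)
  then show ?thesis unfolding y_def by simp
qed

lemma sum_in_span:
  fixes e :: "nat \<Rightarrow> real^'n"
  assumes "\<And>i. i \<in> A \<Longrightarrow> i \<notin> B \<Longrightarrow> c i = 0"
  shows "(\<Sum>i\<in>A. c i *\<^sub>R e i) \<in> span (e ` B)"
proof (rule span_sum)
  fix i assume "i \<in> A"
  then show "c i *\<^sub>R e i \<in> span (e ` B)"
    using assms by (cases "i \<in> B") (auto intro: span_mul span_base span_zero)
qed

lemma diag_sym:
  "x \<bullet> (diag_mat z *v y) = y \<bullet> (diag_mat z *v x)"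
proof -
  have "diag_mat z *v y = (\<chi> k. z k * y $ k)" for y
  proof -
    have "(\<Sum>j\<in>UNIV. (if i = j then z i else 0) * y $ j) = (\<Sum>j\<in>UNIV. if i = j then z i * y $ j else 0)" for i
      by (rule sum.cong) auto
    then show ?thesis by (simp add: diag_mat_def matrix_vector_mult_def vec_eq_iff)
  qed
  then show ?thesis by (simp add: inner_vec_def mult.commute mult.left_commute)
qed


lemma mv_span:
  fixes M :: "real^'n^'n"
  assumes x: "x \<in> span S" and h: "\<And>y. y \<in> S \<Longrightarrow> M *v y \<in> span T"
  shows "M *v x \<in> span T"
proof -
  have "M *v x \<in> (*v) M ` span S" using x by blast
  also have "\<dots> = span ((*v) M ` S)" by (simp add: linear_span_image[OF matrix_vector_mul_linear])
  also have "\<dots> \<subseteq> span T" using h by (intro span_minimal) (auto simp: subspace_span)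
  finally show ?thesis .
qed

lemma span_mono_int:
  fixes e :: "nat \<Rightarrow> real^'n"
  shows "j \<le> k \<Longrightarrow> x \<in> span (e ` {1..j}) \<Longrightarrow> x \<in> span (e ` {1..k})"
  by (meson atLeastatMost_subset_iff image_mono order_refl span_mono subsetD)

lemma krylov_V:
  fixes M :: "real^'n^'n" and e :: "nat \<Rightarrow> real^'n"
  assumes step: "\<And>j. 1 \<le> j \<Longrightarrow> j < N \<Longrightarrow> M *v e j - e (Suc j) \<in> span (e ` {1..j})"
    and mN: "m \<le> N"
  shows "span (e ` {1..m}) = krylov M (e 1) m"
proof -
  define f where "f = (\<lambda>x. M *v x)"
  define G where "G m = {(f ^^ k) (e 1) | k. k < m}" for m
  have kr: "krylov M (e 1) m = span (G m)" for m unfolding krylov_def G_def f_def by simp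
  have Gmono: "j \<le> k \<Longrightarrow> span (G j) \<subseteq> span (G k)" for j k
    by (intro span_mono) (auto simp: G_def)
  have step2: "M *v e j \<in> span (e ` {1..Suc j})" if "1 \<le> j" "j < N" for j
  proof -
    have "M *v e j = (M *v e j - e (Suc j)) + e (Suc j)" by simp
    moreover have "M *v e j - e (Suc j) \<in> span (e ` {1..Suc j})"
      using step[OF that] span_mono_int[of j "Suc j"] by auto
    moreover have "e (Suc j) \<in> span (e ` {1..Suc j})" by (intro span_base) auto
    ultimately show ?thesis by (metis span_add)
  qed
  have a: "(f ^^ k) (e 1) \<in> span (e ` {1..Suc k})" if "Suc k \<le> N" for k
    using that
  proof (induction k)
    case 0 then show ?case by (auto intro: span_base)
  next
    case (Suc k)
    have "M *v (f ^^ k) (e 1) \<in> span (e ` {1..Suc (Suc k)})"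
    proof (rule mv_span[OF Suc.IH])
      show "Suc k \<le> N" using Suc.prems by simp
      fix y assume "y \<in> e ` {1..Suc k}"
      then obtain i where i: "1 \<le> i" "i \<le> Suc k" "y = e i" by auto
      then show "M *v y \<in> span (e ` {1..Suc (Suc k)})"
        using step2[of i] Suc.prems span_mono_int[of "Suc i" "Suc (Suc k)"] by auto
    qed
    then show ?case by (simp add: f_def)
  qed
  have b: "1 \<le> j \<longrightarrow> j \<le> N \<longrightarrow> e j \<in> span (G j)" for j
  proof (induction j rule: less_induct)
    case (less j)
    show ?case
    proof (intro impI)
      assume j: "1 \<le> j" "j \<le> N"
      show "e j \<in> span (G j)"
      proof (cases "j = 1")
        case True
        have "e 1 \<in> G 1" unfolding G_def by (auto intro: exI[of _ 0])
        then show ?thesis using True by (auto intro: span_base)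
      next
        case False
        then obtain i where i: "j = Suc i" "1 \<le> i" using j by (cases j) auto
        have ei: "e i \<in> span (G i)" using less.IH[of i] i j by auto
        have r: "M *v e i - e j \<in> span (G j)"
        proof -
          have "span (e ` {1..i}) \<subseteq> span (G j)"
          proof (rule span_minimal)
            show "e ` {1..i} \<subseteq> span (G j)"
            proof
              fix y assume "y \<in> e ` {1..i}"
              then obtain l where l: "1 \<le> l" "l \<le> i" "y = e l" by auto
              then show "y \<in> span (G j)" using less.IH[of l] i j Gmono[of l j] by auto
            qed
          qed (simp add: subspace_span)
          then show ?thesis using step[of i] i j by auto
        qed
        have "M *v e i \<in> span (G j)"
        proof (rule mv_span[OF ei])
          fix y assume "y \<in> G i"
          then obtain k where k: "k < i" "y = (f ^^ k) (e 1)" unfolding G_def by auto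
          then have "M *v y \<in> G j" unfolding G_def using i by (auto simp: f_def intro!: exI[of _ "Suc k"])
          then show "M *v y \<in> span (G j)" by (rule span_base)
        qed
        then have "M *v e i - (M *v e i - e j) \<in> span (G j)" using r by (rule span_diff)
        then show ?thesis by simp
      qed
    qed
  qed
  show ?thesis unfolding kr
  proof
    show "span (e ` {1..m}) \<subseteq> span (G m)"
    proof (rule span_minimal)
      show "e ` {1..m} \<subseteq> span (G m)"
        using b mN Gmono by fastforce
    qed (simp add: subspace_span)
    show "span (G m) \<subseteq> span (e ` {1..m})"
    proof (rule span_minimal)
      show "G m \<subseteq> span (e ` {1..m})"
      proof
        fix y assume "y \<in> G m"
        then obtain k where k: "k < m" "y = (f ^^ k) (e 1)" unfolding G_def by auto
        then show "y \<in> span (e ` {1..m})" using a[of k] mN span_mono_int[of "Suc k" m] by auto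
      qed
    qed (simp add: subspace_span)
  qed
qed


lemma krylov_W:
  fixes M :: "real^'n^'n" and e :: "nat \<Rightarrow> real^'n"
  assumes step: "\<And>j. 1 \<le> j \<Longrightarrow> j + 2 \<le> N \<Longrightarrow> M *v e j - dd j *\<^sub>R e (j + 2) \<in> span (e ` {1..j+1})"
    and ddnz: "\<And>j. 1 \<le> j \<Longrightarrow> j + 2 \<le> N \<Longrightarrow> dd j \<noteq> 0"
    and mN: "m \<le> N" and N2: "2 \<le> N"
  shows "span (e ` {1..m}) = block_krylov M (e 1) (e 2) m"
proof -
  define f where "f = (\<lambda>x. M *v x)"
  define G where "G m = {(f ^^ k) (e 1) | k. k < (m + 1) div 2} \<union> {(f ^^ k) (e 2) | k. k < m div 2}" for m
  have kr: "block_krylov M (e 1) (e 2) m = span (G m)" for m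
    unfolding block_krylov_def krylov_def G_def f_def span_Un by simp
  have Gmono: "j \<le> k \<Longrightarrow> span (G j) \<subseteq> span (G k)" for j k
  proof (intro span_mono)
    assume "j \<le> k"
    then have "(j + 1) div 2 \<le> (k + 1) div 2" "j div 2 \<le> k div 2" by (simp_all add: div_le_mono)
    then show "G j \<subseteq> G k" unfolding G_def by fastforce
  qed
  have step2: "M *v e j \<in> span (e ` {1..j+2})" if "1 \<le> j" "j + 2 \<le> N" for j
  proof -
    have "M *v e j = (M *v e j - dd j *\<^sub>R e (j + 2)) + dd j *\<^sub>R e (j + 2)" by simp
    moreover have "M *v e j - dd j *\<^sub>R e (j + 2) \<in> span (e ` {1..j+2})"
      using step[OF that] span_mono_int[of "j+1" "j+2"] by auto
    moreover have "dd j *\<^sub>R e (j + 2) \<in> span (e ` {1..j+2})" by (intro span_mul span_base) auto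
    ultimately show ?thesis by (metis span_add)
  qed
  have mvs: "M *v x \<in> span (e ` {1..j+2})" if "x \<in> span (e ` {1..j})" "j + 2 \<le> N" for x j
  proof (rule mv_span[OF that(1)])
    fix y assume "y \<in> e ` {1..j}"
    then obtain i where i: "1 \<le> i" "i \<le> j" "y = e i" by auto
    then show "M *v y \<in> span (e ` {1..j+2})"
      using step2[of i] that span_mono_int[of "i+2" "j+2"] by auto
  qed
  have a: "(f ^^ k) (e 1) \<in> span (e ` {1..2*k+1}) \<and> (2*k+2 \<le> N \<longrightarrow> (f ^^ k) (e 2) \<in> span (e ` {1..2*k+2}))"
    if "2*k+1 \<le> N" for k
    using that
  proof (induction k)
    case 0 then show ?case by (auto intro: span_base)
  next
    case (Suc k)
    have IH: "(f ^^ k) (e 1) \<in> span (e ` {1..2*k+1})" "2*k+2 \<le> N \<Longrightarrow> (f ^^ k) (e 2) \<in> span (e ` {1..2*k+2})"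
      using Suc by auto
    have "M *v (f ^^ k) (e 1) \<in> span (e ` {1..2*k+1+2})"
      by (rule mvs[OF IH(1)]) (use Suc.prems in simp)
    moreover have "2*Suc k+2 \<le> N \<Longrightarrow> M *v (f ^^ k) (e 2) \<in> span (e ` {1..2*k+2+2})"
      by (rule mvs[OF IH(2)]) auto
    ultimately show ?case by (simp add: f_def)
  qed
  have b: "1 \<le> j \<longrightarrow> j \<le> N \<longrightarrow> e j \<in> span (G j)" for j
  proof (induction j rule: less_induct)
    case (less j)
    show ?case
    proof (intro impI)
      assume j: "1 \<le> j" "j \<le> N"
      show "e j \<in> span (G j)"
      proof (cases "j \<le> 2")
        case True
        then have "j = 1 \<or> j = 2" using j by auto
        then have "e j \<in> G j" unfolding G_def by (auto intro: exI[of _ 0])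
        then show ?thesis by (auto intro: span_base)
      next
        case False
        then obtain i where i: "j = i + 2" "1 \<le> i" using j by (metis add.commute le_add1 le_add_diff_inverse not_le one_add_one plus_1_eq_Suc less_Suc_eq_le nat_le_linear diff_add_inverse2 add_le_cancel_left)
        have ei: "e i \<in> span (G i)" using less.IH[of i] i j by auto
        have r: "M *v e i - dd i *\<^sub>R e j \<in> span (G j)"
        proof -
          have "span (e ` {1..i+1}) \<subseteq> span (G j)"
          proof (rule span_minimal)
            show "e ` {1..i+1} \<subseteq> span (G j)"
            proof
              fix y assume "y \<in> e ` {1..i+1}"
              then obtain l where l: "1 \<le> l" "l \<le> i+1" "y = e l" by auto
              then show "y \<in> span (G j)" using less.IH[of l] i j Gmono[of l j] by auto
            qed
          qed (simp add: subspace_span)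
          then show ?thesis using step[of i] i j by auto
        qed
        have "M *v e i \<in> span (G j)"
        proof (rule mv_span[OF ei])
          fix y assume "y \<in> G i"
          then have "M *v y \<in> G j" unfolding G_def using i
            by (auto simp: f_def) (metis Suc_less_eq add_2_eq_Suc' div2_Suc_Suc funpow.simps(2) o_apply)+
          then show "M *v y \<in> span (G j)" by (rule span_base)
        qed
        then have "(1 / dd i) *\<^sub>R (M *v e i - (M *v e i - dd i *\<^sub>R e j)) \<in> span (G j)"
          by (rule span_mul[OF span_diff[OF _ r]])
        then show ?thesis using ddnz[of i] i j by simp
      qed
    qed
  qed
  show ?thesis unfolding kr
  proof
    show "span (e ` {1..m}) \<subseteq> span (G m)"
    proof (rule span_minimal)
      show "e ` {1..m} \<subseteq> span (G m)"
        using b mN Gmono by fastforce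
    qed (simp add: subspace_span)
    show "span (G m) \<subseteq> span (e ` {1..m})"
    proof (rule span_minimal)
      show "G m \<subseteq> span (e ` {1..m})"
      proof
        fix y assume "y \<in> G m"
        then consider k where "k < (m + 1) div 2" "y = (f ^^ k) (e 1)"
          | k where "k < m div 2" "y = (f ^^ k) (e 2)" unfolding G_def by auto
        then show "y \<in> span (e ` {1..m})"
        proof cases
          case 1
          then have "2*k+1 \<le> m" by linarith
          then show ?thesis using 1 a[of k] mN span_mono_int[where j="2*k+1" and k=m and e=e] by auto
        next
          case 2
          then have "2*k+2 \<le> m" by linarith
          then show ?thesis using 2 a[of k] mN span_mono_int[where j="2*k+2" and k=m and e=e] by auto
        qed
      qed
    qed (simp add: subspace_span)
  qed
qed

theorem proposition4p1:
  fixes z :: "'n::finite \<Rightarrow> real"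
    and v w :: "nat \<Rightarrow> real^'n"
    and b c d :: "nat \<Rightarrow> real"
  defines "N \<equiv> CARD('n)"
  assumes N_ge2: "2 \<le> N"
    and z_distinct: "inj z"
    and w1v1: "w 1 \<bullet> v 1 = 1"
    and w2v1: "w 2 \<bullet> v 1 = 0"
    and w2Zv1: "w 2 \<bullet> (diag_mat z *v v 1) = 1"
    and H: "\<And>i j. i \<in> {1..N} \<Longrightarrow> j \<in> {1..N} \<Longrightarrow>
              w i \<bullet> (diag_mat z *v v j) =
                (if i = j then b (i - 1)
                 else if i = j + 1 then 1
                 else if j = i + 1 then c i
                 else if j = i + 2 then d (i + 1)
                 else 0)"
    and biorth: "\<And>i j. i \<in> {1..N} \<Longrightarrow> j \<in> {1..N} \<Longrightarrow>
              w i \<bullet> v j = (if i = j then 1 else 0)"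
    and d_nz: "\<And>n. 2 \<le> n \<Longrightarrow> n \<le> N - 1 \<Longrightarrow> d n \<noteq> 0"
  shows "\<forall>m \<le> N. is_basis_family v m (krylov (diag_mat z) (v 1) m)
                 \<and> is_basis_family w m (block_krylov (diag_mat z) (w 1) (w 2) m)"
proof -
  define F where "F = diag_mat z"
  have bo: "\<And>i j. i \<in> {1..CARD('n)} \<Longrightarrow> j \<in> {1..CARD('n)} \<Longrightarrow> w i \<bullet> v j = (if i = j then 1 else 0)"
    using biorth unfolding N_def by blast
  have bo': "\<And>i j. i \<in> {1..CARD('n)} \<Longrightarrow> j \<in> {1..CARD('n)} \<Longrightarrow> v i \<bullet> w j = (if i = j then 1 else 0)"
    using bo by (simp add: inner_commute)
  have expv: "x = (\<Sum>i\<in>{1..N}. (w i \<bullet> x) *\<^sub>R v i)" for x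
    unfolding N_def by (rule dual_expand[OF bo])
  have expw: "x = (\<Sum>i\<in>{1..N}. (v i \<bullet> x) *\<^sub>R w i)" for x
    unfolding N_def by (rule dual_expand[OF bo'])
  have stepv: "F *v v j - v (Suc j) \<in> span (v ` {1..j})" if j: "1 \<le> j" "j < N" for j
  proof -
    have "v (Suc j) = (\<Sum>i\<in>{1..N}. (if i = Suc j then 1 else 0) *\<^sub>R v i)"
      using j by (simp add: if_distrib[of "\<lambda>a. a *\<^sub>R _"] cong: if_cong)
    then have "F *v v j - v (Suc j) = (\<Sum>i\<in>{1..N}. (w i \<bullet> (F *v v j) - (if i = Suc j then 1 else 0)) *\<^sub>R v i)"
      using expv[of "F *v v j"] by (simp add: scaleR_diff_left sum_subtractf)
    also have "\<dots> \<in> span (v ` {1..j})"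
    proof (rule sum_in_span)
      fix i assume i: "i \<in> {1..N}" "i \<notin> {1..j}"
      then show "w i \<bullet> (F *v v j) - (if i = Suc j then 1 else 0) = 0"
        using H[of i j] j unfolding F_def by auto
    qed
    finally show ?thesis .
  qed
  have stepw: "F *v w j - d (j + 1) *\<^sub>R w (j + 2) \<in> span (w ` {1..j+1})" if j: "1 \<le> j" "j + 2 \<le> N" for j
  proof -
    have "d (j + 1) *\<^sub>R w (j + 2) = (\<Sum>i\<in>{1..N}. (if i = j + 2 then d (j + 1) else 0) *\<^sub>R w i)"
      using j by (simp add: if_distrib[of "\<lambda>a. a *\<^sub>R _"] cong: if_cong)
    then have "F *v w j - d (j + 1) *\<^sub>R w (j + 2) = (\<Sum>i\<in>{1..N}. (v i \<bullet> (F *v w j) - (if i = j + 2 then d (j + 1) else 0)) *\<^sub>R w i)"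
      using expw[of "F *v w j"] by (simp add: scaleR_diff_left sum_subtractf)
    also have "\<dots> \<in> span (w ` {1..j+1})"
    proof (rule sum_in_span)
      fix i assume i: "i \<in> {1..N}" "i \<notin> {1..j+1}"
      have "v i \<bullet> (F *v w j) = w j \<bullet> (F *v v i)" unfolding F_def by (rule diag_sym)
      then show "v i \<bullet> (F *v w j) - (if i = j + 2 then d (j + 1) else 0) = 0"
        using H[of j i] j i unfolding F_def by auto
    qed
    finally show ?thesis .
  qed
  show ?thesis
  proof (intro allI impI conjI)
    fix m assume m: "m \<le> N"
    have du1: "\<And>i j. i \<in> {1..m} \<Longrightarrow> j \<in> {1..m} \<Longrightarrow> w i \<bullet> v j = (if i = j then 1 else 0)"
      using biorth m by auto
    have du2: "\<And>i j. i \<in> {1..m} \<Longrightarrow> j \<in> {1..m} \<Longrightarrow> v i \<bullet> w j = (if i = j then 1 else 0)"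
      using du1 by (simp add: inner_commute)
    show "is_basis_family v m (krylov (diag_mat z) (v 1) m)"
      unfolding is_basis_family_def
      using dual_indep[OF du1] krylov_V[of N F v m, OF stepv m] unfolding F_def by auto
    have "span (w ` {1..m}) = block_krylov F (w 1) (w 2) m"
    proof (rule krylov_W[of N F w "\<lambda>j. d (j + 1)", OF stepw _ m N_ge2])
      fix j :: nat assume "1 \<le> j" "j + 2 \<le> N"
      then show "d (j + 1) \<noteq> 0" using d_nz[of "j+1"] by auto
    qed auto
    then show "is_basis_family w m (block_krylov (diag_mat z) (w 1) (w 2) m)"
      unfolding is_basis_family_def
      using dual_indep[OF du2] unfolding F_def by auto
  qed
qed

end
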